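(* Let $f\in\mathcal{H}$ be nonzero and let $J\subset\Omega(f)$ be an interval such that $f(x)<0$ for all $x\in J$. Then there exists $g\in\mathcal{H}$ such that $f=p_J\,g$.
   Context: $\mathbb{C}^+=\{z:\Im z>0\}$, $\mathcal{H}$ is the set of analytic maps $\mathbb{C}^+\to\overline{\mathbb{C}^+}$. For $f\in\mathcal{H}$ with Nevanlinna representation $f(z)=\alpha z+\beta+\int_{\mathbb{R}}\frac{1+zt}{t-z}\,d\rho(t)$ ($\alpha\ge0,\beta\in\mathbb{R}$, $\rho$ finite positive Borel), $\sigma(f)$ is the closed support of $\rho$ with $\infty$ added if $\alpha>0$ or the support is unbounded, and $\Omega(f)=(\mathbb{R}\cup\{\infty\})\setminus\sigma(f)$; $f$ extends analytically to $(\mathbb{C}\cup\{\infty\})\setminus\sigma(f)$ and is real on $\Omega(f)$. Intervals in $\mathbb{R}\cup\{\infty\}$: for $b>a$, $(b,a)=(b,\infty)\cup\{\infty\}\cup(-\infty,a)$. For a proper open interval $J$, $p_J$ is the unique conformal automorphism of $\mathbb{C}^+$ which is negative exactly on $J$ and has $|p_J(i)|=1$; explicitly $p_{(b,a)}(z)=\frac{|i-b|}{|i-a|}\frac{z-a}{z-b}$ for finite $b<a$, $p_{(-\infty,a)}(z)=\frac{z-a}{|i-a|}$, and $p_J=-1/p_{J'}$ when $J$ is the complement of $\overline{J'}$ with $J'$ of the preceding types. *)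

theory Defs
  imports "HOL-Analysis.Analysis"
begin

definition upper_half :: "complex set" where
  "upper_half = {z. Im z > 0}"

definition nevanlinna_class :: "(complex \<Rightarrow> complex) \<Rightarrow> bool" where
  "nevanlinna_class f \<longleftrightarrow>
     f holomorphic_on upper_half \<and> (\<forall>z\<in>upper_half. Im (f z) \<ge> 0)"

definition nevanlinna_rep ::
  "(complex \<Rightarrow> complex) \<Rightarrow> real \<Rightarrow> real \<Rightarrow> real measure \<Rightarrow> bool" where
  "nevanlinna_rep f \<alpha> \<beta> \<rho> \<longleftrightarrow>
     \<alpha> \<ge> 0 \<and> finite_measure \<rho> \<and> sets \<rho> = sets borel \<and>
     (\<forall>z\<in>upper_half.
        f z = of_real \<alpha> * z + of_real \<beta> +
              (LINT t|\<rho>. (1 + z * of_real t) / (of_real t - z)))"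

definition measure_support :: "real measure \<Rightarrow> real set" where
  "measure_support \<rho> = {t. \<forall>e>0. emeasure \<rho> {t - e<..<t + e} > 0}"

text \<open>Points of the extended real line R \<union> {\<infinity>} are modelled as real option,
  with None standing for \<infinity>.\<close>

definition sigma_set :: "(complex \<Rightarrow> complex) \<Rightarrow> real option set" where
  "sigma_set f =
     (let (\<alpha>, \<beta>, \<rho>) = (SOME (\<alpha>, \<beta>, \<rho>). nevanlinna_rep f \<alpha> \<beta> \<rho>)
      in Some ` measure_support \<rho> \<union>
         (if \<alpha> > 0 \<or> \<not> bounded (measure_support \<rho>) then {None} else {}))"

definition Omega_set :: "(complex \<Rightarrow> complex) \<Rightarrow> real option set" where
  "Omega_set f = UNIV - sigma_set f"

text \<open>Value of (the analytic extension of) f at a point of R \<union> {\<infinity>}: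
  the boundary limit from C+.\<close>

definition ext_val :: "(complex \<Rightarrow> complex) \<Rightarrow> real option \<Rightarrow> complex" where
  "ext_val f x = (case x of
      Some r \<Rightarrow> Lim (at (of_real r) within upper_half) f
    | None \<Rightarrow> Lim (inf at_infinity (principal upper_half)) f)"

text \<open>Proper open interval (arc) of R \<union> {\<infinity>} from endpoint c to endpoint d
  (c \<noteq> d), traversed in the increasing direction; for finite c > d it wraps through \<infinity>.\<close>

fun arc :: "real option \<Rightarrow> real option \<Rightarrow> real option set" where
  "arc (Some c) (Some d) =
     (if c < d then Some ` {c<..<d}
      else if d < c then Some ` {c<..} \<union> {None} \<union> Some ` {..<d}
      else {})"
| "arc None (Some d) = Some ` {..<d}"
| "arc (Some c) None = Some ` {c<..}"
| "arc None None = {}"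

text \<open>The normalized automorphism p_J of C+ negative exactly on J = arc c d,
  given by the explicit formulas.\<close>

fun pJ :: "real option \<Rightarrow> real option \<Rightarrow> complex \<Rightarrow> complex" where
  "pJ (Some c) (Some d) z =
     (if c < d then of_real (cmod (\<i> - of_real c) / cmod (\<i> - of_real d)) *
                    (z - of_real d) / (z - of_real c)
      else - (of_real (cmod (\<i> - of_real c) / cmod (\<i> - of_real d)) *
                    (z - of_real d) / (z - of_real c)))"
| "pJ None (Some d) z = (z - of_real d) / of_real (cmod (\<i> - of_real d))"
| "pJ (Some c) None z = - (of_real (cmod (\<i> - of_real c)) / (z - of_real c))"
| "pJ None None z = 0"

end

theory Submission
  imports Defs "HOL-Probability.Probability" "HOL-Complex_Analysis.Complex_Analysis"
begin

lemma Im_lin_div: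
  fixes z :: complex and a b t :: real
  shows "Im ((of_real a * z + of_real b) / (of_real t - z)) = (a*t+b) * Im z / (cmod (of_real t - z))^2"
  proof -
  have "(cmod (of_real t - z))^2 = (t - Re z)^2 + (Im z)^2" by (simp add: cmod_power2)
  then show ?thesis by (simp add: Im_divide power2_eq_square algebra_simps)
qed

lemma kern_bound:
  fixes z :: complex and t :: real
  assumes "cmod (of_real t - z) \<ge> e" "e > 0"
  shows "cmod ((1 + z * of_real t) / (of_real t - z)) \<le> cmod (1 + z^2) / e + cmod z"
proof -
  have ne: "of_real t - z \<noteq> 0" using assms by auto
  have "(1 + z * of_real t) / (of_real t - z) = (1 + z^2) / (of_real t - z) + z"
    using ne by (simp add: field_simps power2_eq_square)
  also have "cmod \<dots> \<le> cmod ((1 + z^2) / (of_real t - z)) + cmod z" by (rule norm_triangle_ineq)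
  also have "cmod ((1 + z^2) / (of_real t - z)) \<le> cmod (1 + z^2) / e"
    using assms by (simp add: norm_divide) (rule divide_left_mono, auto intro!: mult_pos_pos)
  finally show ?thesis by simp
qed

lemma kern_diff:
  fixes z :: complex and t x0 :: real
  assumes "of_real t \<noteq> z" "t \<noteq> x0"
  shows "(1 + z * of_real t) / (of_real t - z) - (1 + of_real x0 * of_real t) / (of_real t - of_real x0)
     = (z - of_real x0) * (of_real (1 + t^2) / ((of_real t - z) * (of_real t - of_real x0)))"
proof -
  have a: "of_real t - z \<noteq> 0" using assms by auto
  have b: "(of_real t - of_real x0 :: complex) \<noteq> 0" using assms by (metis of_real_eq_iff right_minus_eq)
  show ?thesis using a b by (simp add: field_simps power2_eq_square)
qed


lemma AE_in_support:
  fixes \<rho> :: "real measure"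
  assumes sets: "sets \<rho> = sets borel"
  shows "AE t in \<rho>. t \<in> measure_support \<rho>"
proof -
  define I where "I = {(a,b). a \<in> \<rat> \<and> b \<in> \<rat> \<and> emeasure \<rho> {a<..<b::real} = 0}"
  define N where "N = (\<Union>(a,b)\<in>I. {a<..<b})"
  have cI: "countable I"
  proof -
    have "I \<subseteq> \<rat> \<times> \<rat>" by (auto simp: I_def)
    moreover have "countable (\<rat> \<times> (\<rat>::real set))" by (simp add: countable_rat)
    ultimately show ?thesis by (rule countable_subset)
  qed
  have "N \<in> null_sets \<rho>"
    unfolding N_def
  proof (rule null_sets_UN')
    show "countable I" by fact
    fix ab assume "ab \<in> I"
    then obtain a b where ab: "ab = (a,b)" "emeasure \<rho> {a<..<b} = 0" by (auto simp: I_def)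
    then show "(case ab of (a, b) \<Rightarrow> {a<..<b}) \<in> null_sets \<rho>"
      using sets ab by (simp add: null_sets_def)
  qed
  then have "AE t in \<rho>. t \<notin> N" by (rule AE_not_in)
  moreover have "t \<in> measure_support \<rho>" if "t \<notin> N" for t
  proof (rule ccontr)
    assume "t \<notin> measure_support \<rho>"
    then obtain e where e: "e > 0" "\<not> emeasure \<rho> {t - e<..<t + e} > 0"
      by (auto simp: measure_support_def)
    then have e0: "emeasure \<rho> {t - e<..<t + e} = 0" by (simp add: not_gr_zero)
    obtain a where a: "a \<in> \<rat>" "t - e < a" "a < t" using Rats_dense_in_real[of "t-e" t] e by auto
    obtain b where b: "b \<in> \<rat>" "t < b" "b < t + e" using Rats_dense_in_real[of t "t+e"] e by auto
    have "emeasure \<rho> {a<..<b} \<le> emeasure \<rho> {t - e<..<t + e}"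
      by (rule emeasure_mono) (use a b sets in auto)
    then have "(a,b) \<in> I" using a b e0 by (auto simp: I_def)
    then have "t \<in> N" unfolding N_def by (rule UN_I) (use a b in auto)
    then show False using that by simp
  qed
  ultimately show ?thesis by (metis (mono_tags, lifting) eventually_mono)
qed


definition kern :: "complex \<Rightarrow> real \<Rightarrow> complex" where
  "kern z t = (1 + z * of_real t) / (of_real t - z)"

definition Qk :: "real \<Rightarrow> complex \<Rightarrow> real \<Rightarrow> complex" where
  "Qk x0 z t = of_real (1 + t^2) / ((of_real t - z) * (of_real t - of_real x0))"

lemma kern_meas[measurable]: "kern z \<in> borel_measurable borel"
  unfolding kern_def by measurable

lemma Qk_meas[measurable]: "Qk x0 z \<in> borel_measurable borel"
  unfolding Qk_def by measurable

lemma real_bound_aux: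
  fixes t x0 e :: real
  assumes "e > 0" "\<bar>t - x0\<bar> \<ge> e"
  shows "(1 + t^2) / (t - x0)^2 \<le> (1 + 2*x0^2)/e^2 + 2"
proof -
  have "e^2 \<le> \<bar>t - x0\<bar>^2" by (rule power_mono) (use assms in auto)
  then have p: "(t - x0)^2 \<ge> e^2" by simp
  have "e^2 > 0" using assms by simp
  then have pos: "(t - x0)^2 > 0" using p by linarith
  have "(1 + 2*x0^2) + 2*(t-x0)^2 - (1+t^2) = (t - 2*x0)^2" by (simp add: power2_eq_square algebra_simps)
  moreover have "0 \<le> (t - 2*x0)^2" by simp
  ultimately have "1 + t^2 \<le> (1 + 2*x0^2) + 2*(t-x0)^2" by linarith
  then have "(1 + t^2) / (t - x0)^2 \<le> ((1 + 2*x0^2) + 2*(t-x0)^2) / (t-x0)^2"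
    using pos by (simp add: divide_right_mono)
  also have "\<dots> = (1 + 2*x0^2) / (t-x0)^2 + 2" using pos by (simp add: add_divide_distrib)
  also have "(1 + 2*x0^2) / (t-x0)^2 \<le> (1 + 2*x0^2) / e^2"
    using p assms by (intro divide_left_mono) (auto simp: add_pos_nonneg)
  finally show ?thesis by simp
qed

lemma Qk_bound:
  fixes t x0 e :: real and z :: complex
  assumes "e > 0" "\<bar>t - x0\<bar> \<ge> e" "cmod (z - of_real x0) \<le> e/2"
  shows "cmod (Qk x0 z t) \<le> 2*((1 + 2*x0^2)/e^2 + 2)"
proof -
  have "cmod (of_real t - of_real x0 :: complex) = cmod ((of_real t - z) + (z - of_real x0))" by simp
  also have "\<dots> \<le> cmod (of_real t - z) + cmod (z - of_real x0)" by (rule norm_triangle_ineq)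
  finally have h1: "\<bar>t - x0\<bar> \<le> cmod (of_real t - z) + cmod (z - of_real x0)" by (metis norm_of_real of_real_diff)
  have h: "cmod (of_real t - z) \<ge> \<bar>t - x0\<bar>/2"
  proof -
    define A where "A = cmod (of_real t - z)"
    define B where "B = cmod (z - of_real x0)"
    define D where "D = \<bar>t - x0\<bar>"
    have "D \<le> A + B" "e \<le> D" "B \<le> e/2" using h1 assms(2,3) by (simp_all add: A_def B_def D_def)
    then have "D/2 \<le> A" by linarith
    then show ?thesis by (simp add: A_def D_def)
  qed
  have tx: "\<bar>t - x0\<bar> > 0" using assms by linarith
  have "cmod (Qk x0 z t) = (1 + t^2) / (cmod (of_real t - z) * \<bar>t - x0\<bar>)"
  proof -
    have "cmod (Qk x0 z t) = cmod (of_real (1 + t^2) :: complex) / (cmod (of_real t - z) * cmod (of_real t - of_real x0 :: complex))"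
      by (simp only: Qk_def norm_divide norm_mult)
    also have "cmod (of_real (1 + t^2) :: complex) = 1 + t^2" by (simp only: norm_of_real) (simp add: add_nonneg_nonneg)
    also have "cmod (of_real t - of_real x0 :: complex) = \<bar>t - x0\<bar>" by (metis norm_of_real of_real_diff)
    finally show ?thesis .
  qed
  also have "\<dots> \<le> (1 + t^2) / (\<bar>t - x0\<bar>/2 * \<bar>t - x0\<bar>)"
    using h tx by (intro frac_le mult_right_mono mult_pos_pos) (auto simp: add_nonneg_nonneg)
  also have "\<dots> = 2 * ((1 + t^2) / (t - x0)^2)" using tx by (simp add: power2_eq_square field_simps)
  also have "\<dots> \<le> 2*((1 + 2*x0^2)/e^2 + 2)" by (rule mult_left_mono) (use real_bound_aux[OF assms(1,2)] in auto)
  finally show ?thesis .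
qed


definition ee :: "real \<Rightarrow> complex" where
  "ee s = exp (2 * of_real pi * \<i> * of_real s)"

lemma ee_circ: "circlepath 0 1 s = ee s"
  by (simp add: circlepath ee_def)

lemma norm_ee[simp]: "norm (ee s) = 1"
  by (simp add: ee_def norm_exp_eq_Re)

lemma ee_nz[simp]: "ee s \<noteq> 0"
  by (simp add: ee_def)

lemma cnj_ee: "cnj (ee s) = inverse (ee s)"
proof -
  have "ee s * cnj (ee s) = 1"
    using complex_norm_square[of "ee s"] by simp
  then show ?thesis by (simp add: field_simps)
qed

lemma continuous_ee: "continuous_on S ee"
  unfolding ee_def by (intro continuous_intros)

lemma contour_circ01:
  assumes "(h has_contour_integral I) (circlepath 0 1)"
  shows "((\<lambda>s. h (ee s) * (2 * of_real pi * \<i> * ee s)) has_integral I) {0..1}"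
proof -
  have "((\<lambda>x. h (circlepath 0 1 x) * vector_derivative (circlepath 0 1) (at x within {0..1})) has_integral I) {0..1}"
    using assms by (simp add: has_contour_integral_def)
  then show ?thesis
    by (rule has_integral_eq[rotated]) (simp add: vector_derivative_circlepath01 ee_circ ee_def)
qed

lemma schwarz_pointwise:
  fixes g z u :: complex
  assumes u: "norm u = 1" and cu: "cnj u = inverse u" and z: "norm z < 1"
  shows "(u + z) / (u - z) * of_real (Re g) =
    (2 * (g * u / (u - z)) - g + cnj (g + 2 * (g * cnj z * u / (1 - cnj z * u)))) / 2"
proof -
  have u0: "u \<noteq> 0" using u by auto
  have uz: "u - z \<noteq> 0" using u z by auto
  have "norm (cnj z * u) < 1" using u z by (simp add: norm_mult)
  then have d: "1 - cnj z * u \<noteq> 0" by auto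
  have d': "1 - z * inverse u \<noteq> 0" using d by (metis complex_cnj_cnj complex_cnj_mult complex_cnj_one complex_cnj_diff cu complex_cnj_zero_iff)
  have r: "of_real (Re g) = (g + cnj g) / 2" by (simp add: complex_add_cnj)
  have "cnj (g + 2 * (g * cnj z * u / (1 - cnj z * u))) = cnj g + 2 * (cnj g * z * inverse u / (1 - z * inverse u))"
    by (simp add: cu)
  moreover have "cnj g * z * inverse u / (1 - z * inverse u) = cnj g * z / (u - z)"
    using u0 uz by (simp add: field_simps)
  ultimately show ?thesis unfolding r using u0 uz
    by (simp add: field_simps)
qed


lemma circ_scale:
  assumes "(h has_contour_integral I) (circlepath 0 1)"
  shows "((\<lambda>s. h (ee s) * ee s) has_integral I * inverse (2 * of_real pi * \<i>)) {0..1}"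
proof -
  have "((\<lambda>s. h (ee s) * (2 * of_real pi * \<i> * ee s) * inverse (2 * of_real pi * \<i>)) has_integral I * inverse (2 * of_real pi * \<i>)) {0..1}"
    by (rule has_integral_mult_left[OF contour_circ01[OF assms]])
  then show ?thesis
    by (rule has_integral_eq[rotated]) (simp add: field_simps pi_neq_zero)
qed

lemma schwarz:
  assumes G: "G holomorphic_on cball 0 1" and z: "norm z < 1"
  shows "((\<lambda>s. (ee s + z) / (ee s - z) * of_real (Re (G (ee s)))) has_integral (G z - \<i> * of_real (Im (G 0)))) {0..1}"
proof -
  have A0: "((\<lambda>s. G (ee s) / (ee s - z) * ee s) has_integral (2 * of_real pi * \<i> * G z) * inverse (2 * of_real pi * \<i>)) {0..1}"
    by (rule circ_scale[of "\<lambda>u. G u / (u - z)"]) (rule Cauchy_integral_circlepath_simple[OF G], use z in simp)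
  have A: "((\<lambda>s. G (ee s) * ee s / (ee s - z)) has_integral G z) {0..1}"
  proof -
    have v: "2 * of_real pi * \<i> * G z * inverse (2 * of_real pi * \<i>) = G z" by (simp add: field_simps pi_neq_zero)
    show ?thesis using A0 unfolding v by (rule has_integral_eq[rotated]) auto
  qed
  have B0: "((\<lambda>s. G (ee s) / (ee s - 0) * ee s) has_integral (2 * of_real pi * \<i> * G 0) * inverse (2 * of_real pi * \<i>)) {0..1}"
    by (rule circ_scale[of "\<lambda>u. G u / (u - 0)"]) (rule Cauchy_integral_circlepath_simple[OF G], simp)
  have B: "((\<lambda>s. G (ee s)) has_integral G 0) {0..1}"
  proof -
    have v: "2 * of_real pi * \<i> * G 0 * inverse (2 * of_real pi * \<i>) = G 0" by (simp add: field_simps pi_neq_zero)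
    show ?thesis using B0 unfolding v by (rule has_integral_eq[rotated]) auto
  qed
  have hol: "(\<lambda>u. G u * cnj z / (1 - cnj z * u)) holomorphic_on cball 0 1"
  proof (intro holomorphic_intros G)
    fix u :: complex assume "u \<in> cball 0 1"
    then have u1: "norm u \<le> 1" by simp
    have "norm (cnj z * u) = norm z * norm u" by (simp add: norm_mult)
    also have "\<dots> \<le> norm z" using u1 by (intro mult_left_le) auto
    finally have "norm (cnj z * u) < 1" using z by simp
    then show "1 - cnj z * u \<noteq> 0" by auto
  qed
  have C0: "((\<lambda>u. G u * cnj z / (1 - cnj z * u)) has_contour_integral 0) (circlepath 0 1)"
    by (rule Cauchy_theorem_convex_simple[OF hol]) (auto simp: path_image_circlepath)
  have C: "((\<lambda>s. G (ee s) * cnj z * ee s / (1 - cnj z * ee s)) has_integral 0) {0..1}"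
    using circ_scale[OF C0] unfolding mult_zero_left by (rule has_integral_eq[rotated]) auto
  have BC: "((\<lambda>s. cnj (G (ee s) + 2 * (G (ee s) * cnj z * ee s / (1 - cnj z * ee s)))) has_integral cnj (G 0 + 2 * 0)) {0..1}"
  proof -
    have "((\<lambda>s. G (ee s) + 2 * (G (ee s) * cnj z * ee s / (1 - cnj z * ee s))) has_integral (G 0 + 2 * 0)) {0..1}"
      by (intro has_integral_add B has_integral_mult_right C)
    then have "((cnj \<circ> (\<lambda>s. G (ee s) + 2 * (G (ee s) * cnj z * ee s / (1 - cnj z * ee s)))) has_integral cnj (G 0 + 2 * 0)) {0..1}"
      by (rule iffD2[OF has_integral_cnj])
    then show ?thesis by (simp only: o_def)
  qed
  have all: "((\<lambda>s. (2 * (G (ee s) * ee s / (ee s - z)) - G (ee s) + cnj (G (ee s) + 2 * (G (ee s) * cnj z * ee s / (1 - cnj z * ee s)))) / 2)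
      has_integral (2 * G z - G 0 + cnj (G 0 + 2 * 0)) / 2) {0..1}"
    by (intro has_integral_divide has_integral_add has_integral_diff has_integral_mult_right A B BC)
  have eqI: "(2 * G z - G 0 + cnj (G 0 + 2 * 0)) / 2 = G z - \<i> * of_real (Im (G 0))"
    by (simp add: complex_eq_iff)
  show ?thesis
    using all unfolding eqI
    by (rule has_integral_eq[rotated]) (rule schwarz_pointwise[symmetric, OF norm_ee cnj_ee z])
qed


lemma lborel_int_eq:
  fixes h :: "real \<Rightarrow> complex"
  assumes c: "continuous_on {0..1} h" and hi: "(h has_integral I) {0..1}"
  shows "integral\<^sup>L lborel (\<lambda>s. indicator {0..1} s *\<^sub>R h s) = I"
proof -
  have "integrable lborel (\<lambda>s. indicator {0..1} s *\<^sub>R h s)"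
    by (rule borel_integrable_compact) (use c in auto)
  then have "((\<lambda>s. indicator {0..1} s *\<^sub>R h s) has_integral integral\<^sup>L lborel (\<lambda>s. indicator {0..1} s *\<^sub>R h s)) UNIV"
    by (rule has_integral_integral_lborel)
  moreover have eq: "(\<lambda>s. indicator {0..1} s *\<^sub>R h s) = (\<lambda>s. if s \<in> {0..1} then h s else 0)"
    by (auto simp: indicator_def)
  ultimately have "((\<lambda>s. if s \<in> {0..1} then h s else 0) has_integral integral\<^sup>L lborel (\<lambda>s. indicator {0..1} s *\<^sub>R h s)) UNIV"
    by simp
  then have "(h has_integral integral\<^sup>L lborel (\<lambda>s. indicator {0..1} s *\<^sub>R h s)) {0..1}"
    by (simp only: has_integral_restrict_UNIV)
  then show ?thesis using hi by (rule has_integral_unique)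
qed

definition Kz :: "complex \<Rightarrow> real \<Rightarrow> complex" where
  "Kz z s = (ee s + z) / (ee s - z)"

definition gd :: "(complex \<Rightarrow> complex) \<Rightarrow> real \<Rightarrow> real" where
  "gd G s = indicator {0..1} s * Re (G (ee s))"

lemma ee_in_cball: "ee s \<in> cball 0 1" by simp

lemma cont_G_ee:
  assumes "G holomorphic_on cball 0 1"
  shows "continuous_on UNIV (\<lambda>s. G (ee s))"
  by (rule continuous_on_compose2[OF holomorphic_on_imp_continuous_on[OF assms] continuous_ee]) auto

lemma gd_meas[measurable]:
  assumes "G holomorphic_on cball 0 1"
  shows "gd G \<in> borel_measurable borel"
proof -
  have "(\<lambda>s. Re (G (ee s))) \<in> borel_measurable borel"
    by (rule borel_measurable_continuous_onI) (intro continuous_intros cont_G_ee[OF assms])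
  moreover have "(\<lambda>s::real. indicator {0..1} s :: real) \<in> borel_measurable borel" by (rule borel_measurable_indicator) simp
  ultimately show ?thesis unfolding gd_def[abs_def] by (intro borel_measurable_times)
qed

lemma gd_nonneg:
  assumes "\<And>w. w \<in> cball 0 1 \<Longrightarrow> Re (G w) \<ge> 0"
  shows "gd G s \<ge> 0"
  using assms[OF ee_in_cball] by (simp add: gd_def)

lemma Kz_cont:
  assumes z: "norm z < 1"
  shows "continuous_on UNIV (Kz z)"
proof -
  have "ee s - z \<noteq> 0" for s
  proof
    assume "ee s - z = 0" then have "norm z = 1" by (metis norm_ee right_minus_eq)
    then show False using z by simp
  qed
  then show ?thesis unfolding Kz_def[abs_def]
    by (intro continuous_intros continuous_ee) auto
qed

lemma Kz_meas[measurable]: "norm z < 1 \<Longrightarrow> Kz z \<in> borel_measurable borel"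
  by (rule borel_measurable_continuous_onI[OF Kz_cont])

lemma Kz_bound:
  assumes z: "norm z < 1"
  shows "norm (Kz z s) \<le> 2 / (1 - norm z)"
proof -
  have "norm (ee s + z) \<le> 2" using norm_triangle_ineq[of "ee s" z] z by simp
  moreover have "norm (ee s - z) \<ge> 1 - norm z" using norm_triangle_ineq2[of "ee s" z] by simp
  moreover have "1 - norm z > 0" using z by simp
  ultimately show ?thesis unfolding Kz_def norm_divide
    by (intro frac_le) auto
qed

lemma Kz_0: "Kz 0 s = 1" by (simp add: Kz_def)

lemma schwarz_lborel:
  assumes G: "G holomorphic_on cball 0 1" and z: "norm z < 1"
  shows "integral\<^sup>L lborel (\<lambda>s. gd G s *\<^sub>R Kz z s) = G z - \<i> * of_real (Im (G 0))"
proof -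
  have eq: "(\<lambda>s. gd G s *\<^sub>R Kz z s) = (\<lambda>s. indicator {0..1} s *\<^sub>R ((ee s + z) / (ee s - z) * of_real (Re (G (ee s)))))"
    by (auto simp: gd_def Kz_def fun_eq_iff scaleR_conv_of_real)
  have cont: "continuous_on {0..1} (\<lambda>s. (ee s + z) / (ee s - z) * of_real (Re (G (ee s))))"
  proof -
    have "continuous_on UNIV (\<lambda>s. Kz z s * of_real (Re (G (ee s))))"
      by (intro continuous_intros Kz_cont[OF z] cont_G_ee[OF G])
    then show ?thesis unfolding Kz_def by (rule continuous_on_subset) auto
  qed
  show ?thesis unfolding eq by (rule lborel_int_eq[OF cont schwarz[OF G z]])
qed

lemma gd_integrable:
  assumes G: "G holomorphic_on cball 0 1"
  shows "integrable lborel (gd G)"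
proof -
  have "integrable lborel (\<lambda>s. indicator {0..1} s *\<^sub>R Re (G (ee s)))"
  proof (rule borel_integrable_compact)
    have c: "continuous_on UNIV (\<lambda>s. Re (G (ee s)))" by (intro continuous_intros cont_G_ee[OF G])
    show "continuous_on {0..1} (\<lambda>s. Re (G (ee s)))" by (rule continuous_on_subset[OF c subset_UNIV])
  qed simp
  then show ?thesis by (simp add: gd_def[abs_def])
qed

lemma gd_integral:
  assumes G: "G holomorphic_on cball 0 1"
  shows "integral\<^sup>L lborel (gd G) = Re (G 0)"
proof -
  have "integral\<^sup>L lborel (\<lambda>s. gd G s *\<^sub>R Kz 0 s) = G 0 - \<i> * of_real (Im (G 0))"
    by (rule schwarz_lborel[OF G]) simp
  moreover have "(\<lambda>s. gd G s *\<^sub>R Kz 0 s) = (\<lambda>s. complex_of_real (gd G s))"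
    by (simp add: Kz_0 fun_eq_iff scaleR_conv_of_real)
  ultimately have "of_real (integral\<^sup>L lborel (gd G)) = G 0 - \<i> * of_real (Im (G 0))"
    by (simp only: integral_complex_of_real)
  then show ?thesis by (simp add: complex_eq_iff)
qed


definition rr :: "nat \<Rightarrow> real" where "rr n = 1 - inverse (real (Suc n)) / 2"

lemma rr_pos: "rr n > 0" and rr_less1: "rr n < 1"
proof -
  have "inverse (real (Suc n)) \<le> 1" by (subst inverse_le_1_iff) simp
  moreover have "inverse (real (Suc n)) > 0" by simp
  ultimately show "rr n > 0" "rr n < 1" unfolding rr_def by linarith+
qed

lemma rr_lim: "rr \<longlonglongrightarrow> 1"
proof -
  have "(\<lambda>n. 1 - inverse (real (Suc n)) / 2) \<longlonglongrightarrow> 1 - 0 / 2"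
    by (intro tendsto_intros LIMSEQ_inverse_real_of_nat) simp
  then show ?thesis by (simp add: rr_def[abs_def])
qed

lemma scale_in_ball:
  fixes w :: complex
  assumes "w \<in> cball 0 1"
  shows "of_real (rr n) * w \<in> ball 0 1"
proof -
  have "norm (of_real (rr n) * w) = rr n * norm w" using rr_pos[of n] by (simp add: norm_mult)
  also have "\<dots> \<le> rr n" using assms rr_pos[of n] by (intro mult_left_le) auto
  finally show ?thesis using rr_less1[of n] by simp
qed

lemma holo_scaled:
  assumes F: "F holomorphic_on ball 0 1" and c: "c \<noteq> 0"
  shows "(\<lambda>w. F (of_real (rr n) * w) / c) holomorphic_on cball 0 1"
proof -
  have "(F \<circ> (\<lambda>w. of_real (rr n) * w)) holomorphic_on cball 0 1"
    by (rule holomorphic_on_compose_gen[OF _ F]) (auto intro!: holomorphic_intros scale_in_ball)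
  then have "(\<lambda>w. F (of_real (rr n) * w)) holomorphic_on cball 0 1" by (simp add: o_def)
  then show ?thesis using c by (intro holomorphic_intros)
qed

lemma density_prob:
  assumes G: "G holomorphic_on cball 0 1" and Gre: "\<And>w. w \<in> cball 0 1 \<Longrightarrow> Re (G w) \<ge> 0"
    and A: "A \<in> sets borel" and sub: "{0..1} \<subseteq> A"
  shows "emeasure (density lborel (\<lambda>s. ennreal (gd G s))) A = ennreal (Re (G 0))"
proof -
  have "emeasure (density lborel (\<lambda>s. ennreal (gd G s))) A = (\<integral>\<^sup>+ s. ennreal (gd G s) * indicator A s \<partial>lborel)"
    by (rule emeasure_density) (use A gd_meas[OF G] in auto)
  also have "\<dots> = (\<integral>\<^sup>+ s. ennreal (gd G s) \<partial>lborel)"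
  proof (rule nn_integral_cong)
    fix s :: real
    show "ennreal (gd G s) * indicator A s = ennreal (gd G s)"
      using sub by (cases "s \<in> A") (auto simp: gd_def indicator_def)
  qed
  also have "\<dots> = ennreal (integral\<^sup>L lborel (gd G))"
    by (rule nn_integral_eq_integral[OF gd_integrable[OF G]]) (rule AE_I2, rule gd_nonneg[OF Gre])
  also have "\<dots> = ennreal (Re (G 0))" by (simp add: gd_integral[OF G])
  finally show ?thesis .
qed

lemma density_integral:
  assumes G: "G holomorphic_on cball 0 1" and Gre: "\<And>w. w \<in> cball 0 1 \<Longrightarrow> Re (G w) \<ge> 0"
    and z: "norm z < 1"
  shows "integral\<^sup>L (density lborel (\<lambda>s. ennreal (gd G s))) (Kz z) = G z - \<i> * of_real (Im (G 0))"
proof -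
  have "integral\<^sup>L (density lborel (\<lambda>s. ennreal (gd G s))) (Kz z) = integral\<^sup>L lborel (\<lambda>s. gd G s *\<^sub>R Kz z s)"
    by (rule integral_density) (use gd_meas[OF G] Kz_meas[OF z] in simp_all, rule AE_I2, rule gd_nonneg[OF Gre])
  also have "\<dots> = G z - \<i> * of_real (Im (G 0))" by (rule schwarz_lborel[OF G z])
  finally show ?thesis .
qed


lemma isCont_holo:
  assumes "F holomorphic_on ball 0 1" "norm z < 1"
  shows "isCont F z"
proof -
  have "continuous_on (ball 0 1) F" by (rule holomorphic_on_imp_continuous_on[OF assms(1)])
  then show ?thesis using assms(2) by (simp add: continuous_on_eq_continuous_at)
qed

lemma herglotz_disk:
  assumes F: "F holomorphic_on ball 0 1" and Fre: "\<And>w. w \<in> ball 0 1 \<Longrightarrow> Re (F w) \<ge> 0"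
    and m: "Re (F 0) > 0"
  shows "\<exists>M. real_distribution M \<and> (\<forall>z. norm z < 1 \<longrightarrow>
      F z = \<i> * of_real (Im (F 0)) + of_real (Re (F 0)) * integral\<^sup>L M (Kz z))"
proof -
  define m where "m = Re (F 0)"
  have m0: "m > 0" using m by (simp add: m_def)
  define G where "G n = (\<lambda>w. F (of_real (rr n) * w) / of_real m)" for n
  have Gh: "G n holomorphic_on cball 0 1" for n
    unfolding G_def by (rule holo_scaled[OF F]) (use m0 in simp)
  have Gre: "Re (G n w) \<ge> 0" if "w \<in> cball 0 1" for n w
    using Fre[OF scale_in_ball[OF that]] m0 by (simp add: G_def)
  have G0: "G n 0 = F 0 / of_real m" for n by (simp add: G_def)
  define \<mu> where "\<mu> n = density lborel (\<lambda>s. ennreal (gd (G n) s))" for n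
  have em: "emeasure (\<mu> n) A = 1" if "A \<in> sets borel" "{0..1} \<subseteq> A" for n A
  proof -
    have "emeasure (\<mu> n) A = ennreal (Re (G n 0))"
      unfolding \<mu>_def by (rule density_prob[OF Gh Gre that])
    also have "Re (G n 0) = 1" using m0 by (simp add: G0 m_def)
    finally show ?thesis by simp
  qed
  have rd: "real_distribution (\<mu> n)" for n
  proof -
    have sp: "space (\<mu> n) = UNIV" by (simp add: \<mu>_def)
    have "prob_space (\<mu> n)" by (rule prob_spaceI) (simp add: sp em)
    moreover have "sets (\<mu> n) = sets borel" by (simp add: \<mu>_def)
    ultimately show ?thesis by (simp add: real_distribution_def real_distribution_axioms_def)
  qed
  have tight: "tight \<mu>"
    unfolding tight_def
  proof (intro conjI allI impI)
    show "real_distribution (\<mu> n)" for n by (rule rd)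
    fix \<epsilon> :: real assume e: "\<epsilon> > 0"
    show "\<exists>a b. a < b \<and> (\<forall>n. 1 - \<epsilon> < measure (\<mu> n) {a<..b})"
    proof (intro exI conjI allI)
      show "(-1::real) < 2" by simp
      fix n
      have "emeasure (\<mu> n) {-1<..2} = 1" by (rule em) auto
      then have "measure (\<mu> n) {-1<..2} = 1" by (simp add: measure_def)
      then show "1 - \<epsilon> < measure (\<mu> n) {-1<..2}" using e by simp
    qed
  qed
  obtain r M where r: "strict_mono r" and M: "real_distribution M"
    and wc: "weak_conv_m (\<mu> \<circ> id \<circ> r) M"
    using tight_imp_convergent_subsubsequence[OF tight strict_mono_id] by blast
  have "F z = \<i> * of_real (Im (F 0)) + of_real (Re (F 0)) * integral\<^sup>L M (Kz z)" if z: "norm z < 1" for z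
  proof -
    have I: "integral\<^sup>L (\<mu> n) (Kz z) = G n z - \<i> * of_real (Im (G n 0))" for n
      unfolding \<mu>_def by (rule density_integral[OF Gh Gre z])
    have L1: "(\<lambda>k. integral\<^sup>L ((\<mu> \<circ> id \<circ> r) k) (Kz z)) \<longlonglongrightarrow> integral\<^sup>L M (Kz z)"
    proof (rule weak_conv_imp_integral_bdd_continuous_conv)
      show "real_distribution ((\<mu> \<circ> id \<circ> r) n)" for n by (simp add: rd)
      show "real_distribution M" by (rule M)
      show "weak_conv_m (\<mu> \<circ> id \<circ> r) M" by (rule wc)
      show "isCont (Kz z) x" for x
        using Kz_cont[OF z] by (simp add: continuous_on_eq_continuous_at)
      show "norm (Kz z x) \<le> 2 / (1 - norm z)" for x by (rule Kz_bound[OF z])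
    qed
    have L2: "(\<lambda>k. G (r k) z - \<i> * of_real (Im (G (r k) 0))) \<longlonglongrightarrow> F z / of_real m - \<i> * of_real (Im (F 0 / of_real m))"
    proof -
      have "(rr \<circ> r) \<longlonglongrightarrow> 1" by (rule LIMSEQ_subseq_LIMSEQ[OF rr_lim r])
      then have "(\<lambda>k. rr (r k)) \<longlonglongrightarrow> 1" by (simp add: o_def)
      then have "(\<lambda>k. of_real (rr (r k)) * z) \<longlonglongrightarrow> of_real 1 * z"
        by (intro tendsto_intros)
      then have "(\<lambda>k. of_real (rr (r k)) * z) \<longlonglongrightarrow> z" by simp
      then have "(\<lambda>k. F (of_real (rr (r k)) * z)) \<longlonglongrightarrow> F z"
        by (rule isCont_tendsto_compose[OF isCont_holo[OF F z]])
      then have "(\<lambda>k. F (of_real (rr (r k)) * z) / of_real m - \<i> * of_real (Im (F 0 / of_real m))) \<longlonglongrightarrow> F z / of_real m - \<i> * of_real (Im (F 0 / of_real m))"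
        using m0 by (intro tendsto_intros) auto
      then show ?thesis by (simp add: G_def)
    qed
    have "integral\<^sup>L M (Kz z) = F z / of_real m - \<i> * of_real (Im (F 0 / of_real m))"
    proof (rule LIMSEQ_unique[OF L1])
      show "(\<lambda>k. integral\<^sup>L ((\<mu> \<circ> id \<circ> r) k) (Kz z)) \<longlonglongrightarrow> F z / of_real m - \<i> * of_real (Im (F 0 / of_real m))"
        using L2 by (simp add: I)
    qed
    then have "of_real m * integral\<^sup>L M (Kz z) = F z - \<i> * of_real (Im (F 0))"
      using m0 by (simp add: field_simps)
    then show ?thesis by (simp add: m_def)
  qed
  then show ?thesis using M by blast
qed


lemma herglotz_disk0:
  assumes F: "F holomorphic_on ball 0 1" and Fre: "\<And>w. w \<in> ball 0 1 \<Longrightarrow> Re (F w) \<ge> 0"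
    and m: "Re (F 0) = 0" and z: "norm z < 1"
  shows "F z = \<i> * of_real (Im (F 0))"
proof -
  define G where "G n = (\<lambda>w. F (of_real (rr n) * w) / 1)" for n
  have Gh: "G n holomorphic_on cball 0 1" for n
    unfolding G_def by (rule holo_scaled[OF F]) simp
  have Gre: "Re (G n w) \<ge> 0" if "w \<in> cball 0 1" for n w
    using Fre[OF scale_in_ball[OF that]] by (simp add: G_def)
  have eq: "F (of_real (rr n) * z) = \<i> * of_real (Im (F 0))" for n
  proof -
    have "integral\<^sup>L lborel (gd (G n)) = 0" using gd_integral[OF Gh] m by (simp add: G_def)
    then have ae: "AE s in lborel. gd (G n) s = 0"
      using integral_nonneg_eq_0_iff_AE[OF gd_integrable[OF Gh]] gd_nonneg[OF Gre] by simp
    have "integral\<^sup>L lborel (\<lambda>s. gd (G n) s *\<^sub>R Kz z s) = 0"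
      by (rule integral_eq_zero_AE) (use ae in \<open>rule eventually_mono, simp\<close>)
    then have "G n z - \<i> * of_real (Im (G n 0)) = 0" using schwarz_lborel[OF Gh z] by simp
    then show ?thesis by (simp add: G_def)
  qed
  have "(rr) \<longlonglongrightarrow> 1" by (rule rr_lim)
  then have "(\<lambda>k. of_real (rr k) * z) \<longlonglongrightarrow> of_real 1 * z" by (intro tendsto_intros)
  then have "(\<lambda>k. of_real (rr k) * z) \<longlonglongrightarrow> z" by simp
  then have "(\<lambda>k. F (of_real (rr k) * z)) \<longlonglongrightarrow> F z"
    by (rule isCont_tendsto_compose[OF isCont_holo[OF F z]])
  then have "(\<lambda>k. \<i> * of_real (Im (F 0))) \<longlonglongrightarrow> F z" by (simp only: eq)
  then show ?thesis using LIMSEQ_const_iff by metis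
qed


definition phi :: "complex \<Rightarrow> complex" where "phi w = \<i> * (1 + w) / (1 - w)"
definition psi :: "complex \<Rightarrow> complex" where "psi z = (z - \<i>) / (z + \<i>)"

lemma Im_phi: "Im (phi w) = (1 - (Re w)^2 - (Im w)^2) / ((1 - Re w)^2 + (Im w)^2)"
  by (simp add: phi_def Re_divide Im_divide power2_eq_square algebra_simps)

lemma phi_upper:
  assumes "norm w < 1" shows "Im (phi w) > 0"
proof -
  have "(cmod w)^2 < 1^2" by (rule power_strict_mono) (use assms in auto)
  then have "(Re w)^2 + (Im w)^2 < 1" by (simp add: cmod_power2)
  moreover have "(1 - Re w)^2 + (Im w)^2 > 0"
  proof -
    have "Re w < 1" using assms abs_Re_le_cmod[of w] by linarith
    then have "(1 - Re w)^2 > 0" by simp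
    then show ?thesis by (simp add: add_pos_nonneg)
  qed
  ultimately show ?thesis unfolding Im_phi by (intro divide_pos_pos) auto
qed

lemma phi_real:
  assumes "norm e = 1" shows "Im (phi e) = 0"
proof -
  have "(cmod e)^2 = 1" using assms by simp
  then have "(Re e)^2 + (Im e)^2 = 1" by (simp add: cmod_power2)
  then show ?thesis unfolding Im_phi by simp
qed

lemma psi_norm:
  assumes z: "Im z > 0" shows "norm (psi z) < 1"
proof -
  have nz: "z + \<i> \<noteq> 0" using z by (auto simp: complex_eq_iff)
  have a: "(cmod (z - \<i>))^2 = (Re z)^2 + (Im z - 1)^2" by (simp add: cmod_power2)
  have b: "(cmod (z + \<i>))^2 = (Re z)^2 + (Im z + 1)^2" by (simp add: cmod_power2)
  have "(Re z)^2 + (Im z - 1)^2 < (Re z)^2 + (Im z + 1)^2"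
    using z by (simp add: power2_eq_square algebra_simps)
  then have "(cmod (z - \<i>))^2 < (cmod (z + \<i>))^2" unfolding a b .
  then have "cmod (z - \<i>) < cmod (z + \<i>)" by (simp add: power_less_imp_less_base)
  then show ?thesis using nz by (simp add: psi_def norm_divide divide_less_eq)
qed

lemma phi_psi:
  assumes z: "Im z > 0" shows "phi (psi z) = z"
proof -
  have nz: "z + \<i> \<noteq> 0" using z by (auto simp: complex_eq_iff)
  have a: "1 + psi z = 2 * z / (z + \<i>)" using nz by (simp add: psi_def field_simps)
  have b: "1 - psi z = 2 * \<i> / (z + \<i>)" using nz by (simp add: psi_def field_simps)
  have "\<i> * (z * 2) - 2 = 2 * \<i> * (z + \<i>)" by (simp add: algebra_simps)
  then have nz3: "\<i> * (z * 2) - 2 \<noteq> 0" using nz by simp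
  have "(\<i> * (z * (z * 2)) - z * 2) = z * (\<i> * (z * 2) - 2)" by (simp add: algebra_simps)
  then show ?thesis unfolding phi_def a b using nz nz3 by (simp add: field_simps)
qed

lemma psi_phi:
  assumes "e \<noteq> 1" shows "psi (phi e) = e"
proof -
  have nz: "1 - e \<noteq> 0" using assms by simp
  have nz2: "\<i> * (1 + e) + \<i> * (1 - e) \<noteq> 0" by (simp add: algebra_simps)
  show ?thesis using nz nz2 by (simp add: phi_def psi_def field_simps)
qed

lemma kern_ident:
  fixes t :: real
  assumes z: "Im z > 0"
  shows "\<i> * (psi (of_real t) + psi z) / (psi (of_real t) - psi z) = (1 + z * of_real t) / (of_real t - z)"
proof -
  have nz: "z + \<i> \<noteq> 0" using z by (auto simp: complex_eq_iff)
  have nt: "of_real t + \<i> \<noteq> 0" by (auto simp: complex_eq_iff)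
  have tz: "of_real t - z \<noteq> 0" using z by auto
  have "(of_real t - \<i>) * (z + \<i>) - (z - \<i>) * (of_real t + \<i>) = 2 * \<i> * (of_real t - z)"
    by (simp add: algebra_simps)
  then have d: "(of_real t - \<i>) * (z + \<i>) - (z - \<i>) * (of_real t + \<i>) \<noteq> 0" using tz by simp
  have "psi (of_real t) + psi z = ((of_real t - \<i>) * (z + \<i>) + (z - \<i>) * (of_real t + \<i>)) / ((of_real t + \<i>) * (z + \<i>))"
    using nz nt by (simp add: psi_def field_simps)
  moreover have "psi (of_real t) - psi z = ((of_real t - \<i>) * (z + \<i>) - (z - \<i>) * (of_real t + \<i>)) / ((of_real t + \<i>) * (z + \<i>))"
    using nz nt by (simp add: psi_def field_simps)
  moreover have "(of_real t - \<i>) * (z + \<i>) + (z - \<i>) * (of_real t + \<i>) = 2 * (1 + z * of_real t)"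
    by (simp add: algebra_simps)
  ultimately have "\<i> * (psi (of_real t) + psi z) / (psi (of_real t) - psi z) = \<i> * (2 * (1 + z * of_real t)) / (2 * \<i> * (of_real t - z))"
    using nz nt d \<open>(of_real t - \<i>) * (z + \<i>) - (z - \<i>) * (of_real t + \<i>) = 2 * \<i> * (of_real t - z)\<close>
    by (simp add: divide_divide_eq_left)
  also have "\<dots> = (1 + z * of_real t) / (of_real t - z)" using tz by (simp add: field_simps)
  finally show ?thesis .
qed


lemma ee_meas[measurable]: "ee \<in> borel_measurable borel"
  by (rule borel_measurable_continuous_onI[OF continuous_ee])

definition Tm :: "real \<Rightarrow> real" where "Tm s = Re (phi (ee s))"

lemma Tm_meas[measurable]: "Tm \<in> borel_measurable borel"
  unfolding Tm_def[abs_def] phi_def by measurable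

definition Aset :: "real set" where "Aset = {s. ee s = 1}"

lemma Aset_meas[measurable]: "Aset \<in> sets borel"
proof -
  have "closed {s. ee s = (\<lambda>_. 1) s}" by (rule closed_Collect_eq[OF continuous_ee continuous_on_const])
  then show ?thesis unfolding Aset_def by simp
qed

lemma iK_split:
  assumes z: "Im z > 0"
  shows "\<i> * Kz (psi z) s = indicator Aset s *\<^sub>R z + indicator (- Aset) s *\<^sub>R kern z (Tm s)"
proof (cases "ee s = 1")
  case True
  have "\<i> * Kz (psi z) s = phi (psi z)" using True by (simp add: Kz_def phi_def)
  also have "\<dots> = z" by (rule phi_psi[OF z])
  finally show ?thesis using True by (simp add: Aset_def)
next
  case False
  have r: "phi (ee s) = of_real (Tm s)"
    using phi_real[OF norm_ee[of s]] by (simp add: Tm_def complex_eq_iff)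
  have e: "ee s = psi (of_real (Tm s))" using psi_phi[OF False] r by simp
  have "\<i> * Kz (psi z) s = \<i> * (psi (of_real (Tm s)) + psi z) / (psi (of_real (Tm s)) - psi z)"
    unfolding Kz_def e by simp
  also have "\<dots> = kern z (Tm s)" unfolding kern_def by (rule kern_ident[OF z])
  finally show ?thesis using False by (simp add: Aset_def)
qed

lemma phi_holo: "phi holomorphic_on ball 0 1"
proof -
  have "(\<lambda>w. \<i> * (1 + w) / (1 - w)) holomorphic_on ball 0 1"
    by (intro holomorphic_intros) auto
  then show ?thesis by (simp add: phi_def[abs_def])
qed

lemma rep_const:
  fixes c :: real
  assumes "\<And>z. Im z > 0 \<Longrightarrow> f z = of_real c"
  shows "nevanlinna_rep f 0 c (density (lborel :: real measure) (\<lambda>_. ennreal 0))"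
proof -
  have fin: "finite_measure (density (lborel :: real measure) (\<lambda>_. ennreal 0))"
    by (rule finite_measureI) (simp add: emeasure_density)
  have i: "(LINT t|density lborel (\<lambda>_. ennreal 0). (1 + z * of_real t) / (of_real t - z)) = 0" for z :: complex
  proof -
    have "(LINT t|density lborel (\<lambda>_. ennreal 0). (1 + z * of_real t) / (of_real t - z)) =
          (LINT t|lborel. (0::real) *\<^sub>R ((1 + z * of_real t) / (of_real t - z)))"
      by (rule integral_density) auto
    then show ?thesis by simp
  qed
  have s: "sets (density (lborel :: real measure) (\<lambda>_. ennreal 0)) = sets borel" by simp
  show ?thesis unfolding nevanlinna_rep_def upper_half_def using fin s i assms by simp
qed


lemma meas_rho:
  assumes "sets \<rho> = sets (borel :: real measure)" "g \<in> borel_measurable borel"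
  shows "g \<in> borel_measurable \<rho>"
  by (subst measurable_cong_sets[OF assms(1) refl]) (rule assms(2))

lemma cmod_t_minus_z: "Im z \<le> cmod (of_real t - z)"
proof -
  have "\<bar>Im (of_real t - z)\<bar> \<le> cmod (of_real t - z)" by (rule abs_Im_le_cmod)
  then show ?thesis by simp
qed

lemma integrable_kern:
  assumes fin: "finite_measure \<rho>" and sets: "sets \<rho> = sets borel" and z: "Im z > 0"
  shows "integrable \<rho> (kern z)"
proof (rule finite_measure.integrable_const_bound[OF fin])
  show "AE t in \<rho>. norm (kern z t) \<le> cmod (1 + z^2) / Im z + cmod z"
    unfolding kern_def using kern_bound[OF cmod_t_minus_z z] by simp
  show "kern z \<in> borel_measurable \<rho>" using meas_rho[OF sets kern_meas] .
qed

lemma AE_far: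
  assumes sets: "sets \<rho> = sets (borel :: real measure)" and null: "emeasure \<rho> {x0 - e<..<x0 + e} = 0"
  shows "AE t in \<rho>. e \<le> \<bar>t - x0\<bar>"
proof -
  have "{x0 - e<..<x0 + e} \<in> null_sets \<rho>" using null sets by (simp add: null_sets_def)
  then have "AE t in \<rho>. t \<notin> {x0 - e<..<x0 + e}" by (rule AE_not_in)
  then show ?thesis by (rule eventually_mono) auto
qed

lemma integrable_kern_real:
  assumes fin: "finite_measure \<rho>" and sets: "sets \<rho> = sets borel" and e: "e > 0"
    and null: "emeasure \<rho> {x0 - e<..<x0 + e} = 0"
  shows "integrable \<rho> (kern (of_real x0))"
proof (rule finite_measure.integrable_const_bound[OF fin])
  show "AE t in \<rho>. norm (kern (of_real x0) t) \<le> cmod (1 + (of_real x0)^2) / e + cmod (of_real x0 :: complex)"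
    using AE_far[OF sets null]
  proof (rule eventually_mono)
    fix t assume "e \<le> \<bar>t - x0\<bar>"
    then have "e \<le> cmod (of_real t - of_real x0 :: complex)" by (metis norm_of_real of_real_diff)
    then show "norm (kern (of_real x0) t) \<le> cmod (1 + (of_real x0)^2) / e + cmod (of_real x0 :: complex)"
      unfolding kern_def using kern_bound[OF _ e] by blast
  qed
  show "kern (of_real x0) \<in> borel_measurable \<rho>" using meas_rho[OF sets kern_meas] .
qed

lemma Qk_eq:
  assumes "Im z > 0" "t \<noteq> x0"
  shows "Qk x0 z t = (kern z t - kern (of_real x0) t) / (z - of_real x0)"
proof -
  have "of_real t \<noteq> z" using assms by auto
  moreover have "z - of_real x0 \<noteq> 0" using assms by auto
  ultimately have "kern z t - kern (of_real x0) t = (z - of_real x0) * Qk x0 z t"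
    using kern_diff[of t z x0] assms unfolding kern_def Qk_def by blast
  then show ?thesis using \<open>z - of_real x0 \<noteq> 0\<close> by simp
qed

lemma integrable_Qk:
  assumes fin: "finite_measure \<rho>" and sets: "sets \<rho> = sets borel" and e: "e > 0"
    and null: "emeasure \<rho> {x0 - e<..<x0 + e} = 0" and z: "Im z > 0"
  shows "integrable \<rho> (Qk x0 z)"
proof -
  have i: "integrable \<rho> (\<lambda>t. (kern z t - kern (of_real x0) t) / (z - of_real x0))"
    using integrable_kern[OF fin sets z] integrable_kern_real[OF fin sets e null] by auto
  have "AE t in \<rho>. Qk x0 z t = (kern z t - kern (of_real x0) t) / (z - of_real x0)"
    using AE_far[OF sets null] by (rule eventually_mono) (use e z in \<open>auto intro: Qk_eq\<close>)
  then show ?thesis using i meas_rho[OF sets Qk_meas] meas_rho[OF sets] 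
    by (subst integrable_cong_AE) auto
qed


lemma herglotz: "nevanlinna_class f \<Longrightarrow> \<exists>\<alpha> \<beta> \<rho>. nevanlinna_rep f \<alpha> \<beta> \<rho>"
proof -
  assume nc: "nevanlinna_class f"
  have hf: "f holomorphic_on upper_half" and fim: "\<And>z. z \<in> upper_half \<Longrightarrow> Im (f z) \<ge> 0"
    using nc by (auto simp: nevanlinna_class_def)
  define F where "F w = - \<i> * f (phi w)" for w
  have ph_up: "phi w \<in> upper_half" if "w \<in> ball 0 1" for w
    using phi_upper[of w] that by (simp add: upper_half_def)
  have Fh: "F holomorphic_on ball 0 1"
  proof -
    have "(f \<circ> phi) holomorphic_on ball 0 1"
      by (rule holomorphic_on_compose_gen[OF phi_holo hf]) (use ph_up in blast)
    then have "(\<lambda>w. - \<i> * (f \<circ> phi) w) holomorphic_on ball 0 1" by (intro holomorphic_intros)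
    then show ?thesis by (simp add: F_def[abs_def] o_def)
  qed
  have Fre: "Re (F w) \<ge> 0" if "w \<in> ball 0 1" for w
    using fim[OF ph_up[OF that]] by (simp add: F_def)
  have psi_ball: "psi z \<in> ball 0 1" if "Im z > 0" for z
    using psi_norm[OF that] by simp
  have fz: "f z = \<i> * F (psi z)" if z: "Im z > 0" for z
    by (simp add: F_def phi_psi[OF z])
  show ?thesis
  proof (cases "Re (F 0) = 0")
    case True
    have "f z = of_real (- Im (F 0))" if z: "Im z > 0" for z
    proof -
      have "F (psi z) = \<i> * of_real (Im (F 0))"
        by (rule herglotz_disk0[OF Fh Fre True]) (use psi_norm[OF z] in simp_all)
      then show ?thesis using fz[OF z] by simp
    qed
    then show ?thesis using rep_const by blast
  next
    case False
    have m0: "Re (F 0) > 0" using Fre[of 0] False by simp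
    define m where "m = Re (F 0)"
    obtain M where M: "real_distribution M"
      and FM: "\<And>z. norm z < 1 \<Longrightarrow> F z = \<i> * of_real (Im (F 0)) + of_real (Re (F 0)) * integral\<^sup>L M (Kz z)"
      using herglotz_disk[OF Fh Fre m0] by blast
    interpret M: real_distribution M by (rule M)
    have setsM: "sets M = sets borel" by simp
    define g where "g s = ennreal (m * indicator (- Aset) s)" for s
    define D where "D = density M g"
    define \<rho> where "\<rho> = distr D borel Tm"
    have gmeas: "g \<in> borel_measurable M"
      unfolding g_def by (intro meas_rho[OF setsM]) measurable
    have setsD: "sets D = sets borel" by (simp add: D_def)
    have TmD: "Tm \<in> measurable D borel"
      using meas_rho[OF setsD Tm_meas] .
    have finD: "finite_measure D"
    proof (rule finite_measureI)
      have "emeasure D (space D) = (\<integral>\<^sup>+ s. g s * indicator (space M) s \<partial>M)"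
        unfolding D_def by (simp add: emeasure_density gmeas)
      also have "\<dots> \<le> (\<integral>\<^sup>+ s. ennreal m \<partial>M)"
        by (rule nn_integral_mono) (use m0 in \<open>auto simp: g_def m_def indicator_def\<close>)
      also have "\<dots> = ennreal m" using M.emeasure_space_1 by (simp add: M.space_eq_univ)
      finally show "emeasure D (space D) \<noteq> \<infinity>" by (auto simp: top_unique)
    qed
    have fin: "finite_measure \<rho>"
      unfolding \<rho>_def by (rule finite_measure.finite_measure_distr[OF finD TmD])
    have sets\<rho>: "sets \<rho> = sets borel" by (simp add: \<rho>_def)
    define \<alpha> where "\<alpha> = m * measure M Aset"
    have al: "\<alpha> \<ge> 0" using m0 by (simp add: \<alpha>_def m_def)
    have eq: "f z = of_real \<alpha> * z + of_real (- Im (F 0)) + (LINT t|\<rho>. (1 + z * of_real t) / (of_real t - z))"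
      if z: "Im z > 0" for z
    proof -
      define w where "w = psi z"
      have w: "norm w < 1" using psi_norm[OF z] by (simp add: w_def)
      have iK: "integrable M (Kz w)"
        by (rule M.integrable_const_bound[where B="2 / (1 - norm w)"])
          (use Kz_bound[OF w] meas_rho[OF setsM Kz_meas[OF w]] in auto)
      have iA: "integrable M (\<lambda>s. indicator Aset s *\<^sub>R z)"
        by (rule M.integrable_const_bound[where B="norm z"])
          (auto simp: indicator_def intro!: meas_rho[OF setsM])
      have "(LINT t|\<rho>. (1 + z * of_real t) / (of_real t - z)) = integral\<^sup>L \<rho> (kern z)"
        by (simp add: kern_def[abs_def])
      also have "\<dots> = integral\<^sup>L D (\<lambda>s. kern z (Tm s))"
        unfolding \<rho>_def by (rule integral_distr[OF TmD kern_meas])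
      also have "\<dots> = integral\<^sup>L M (\<lambda>s. (m * indicator (- Aset) s) *\<^sub>R kern z (Tm s))"
        unfolding D_def g_def
      proof (rule integral_density)
        show "(\<lambda>s. kern z (Tm s)) \<in> borel_measurable M" by (intro meas_rho[OF setsM]) measurable
        show "(\<lambda>s. m * indicator (- Aset) s) \<in> borel_measurable M" by (intro meas_rho[OF setsM]) measurable
        show "AE s in M. 0 \<le> m * indicator (- Aset) s" using m0 by (simp add: m_def)
      qed
      also have "\<dots> = m *\<^sub>R integral\<^sup>L M (\<lambda>s. indicator (- Aset) s *\<^sub>R kern z (Tm s))"
        by (simp add: integral_scaleR_right[symmetric] scaleR_scaleR)
      also have "integral\<^sup>L M (\<lambda>s. indicator (- Aset) s *\<^sub>R kern z (Tm s)) =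
          integral\<^sup>L M (\<lambda>s. \<i> * Kz w s - indicator Aset s *\<^sub>R z)"
        using iK_split[OF z] by (simp add: w_def)
      also have "\<dots> = \<i> * integral\<^sup>L M (Kz w) - integral\<^sup>L M (\<lambda>s. indicator Aset s *\<^sub>R z)"
        using iK iA by simp
      also have "integral\<^sup>L M (\<lambda>s. indicator Aset s *\<^sub>R z) = measure M Aset *\<^sub>R z"
      proof -
        have ia: "integrable M (indicator Aset :: real \<Rightarrow> real)"
          by (rule integrable_real_indicator) (simp_all add: M.emeasure_finite[unfolded top.not_eq_extremum] less_top[symmetric])
        have "integral\<^sup>L M (\<lambda>s. indicator Aset s *\<^sub>R z) = integral\<^sup>L M (indicator Aset) *\<^sub>R z"
          using ia by (rule integral_scaleR_left)
        also have "integral\<^sup>L M (indicator Aset :: real \<Rightarrow> real) = measure M Aset"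
          by (simp add: M.space_eq_univ)
        finally show ?thesis .
      qed
      finally have I: "(LINT t|\<rho>. (1 + z * of_real t) / (of_real t - z)) =
          m *\<^sub>R (\<i> * integral\<^sup>L M (Kz w) - measure M Aset *\<^sub>R z)" .
      have "f z = \<i> * F w" using fz[OF z] by (simp add: w_def)
      also have "\<dots> = \<i> * (\<i> * of_real (Im (F 0)) + of_real m * integral\<^sup>L M (Kz w))"
        using FM[OF w] by (simp add: m_def)
      finally show ?thesis unfolding I \<alpha>_def by (simp add: scaleR_conv_of_real algebra_simps)
    qed
    have "nevanlinna_rep f \<alpha> (- Im (F 0)) \<rho>"
      unfolding nevanlinna_rep_def upper_half_def using al fin sets\<rho> eq by auto
    then show ?thesis by blast
  qed
qed


lemma norm_integral_AE_bound:
  fixes f :: "'a \<Rightarrow> complex"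
  assumes fin: "finite_measure M" and bd: "AE x in M. norm (f x) \<le> K" and int: "integrable M f"
  shows "norm (integral\<^sup>L M f) \<le> K * measure M (space M)"
proof -
  have "norm (integral\<^sup>L M f) \<le> integral\<^sup>L M (\<lambda>x. norm (f x))" by (rule integral_norm_bound)
  also have "\<dots> \<le> integral\<^sup>L M (\<lambda>x. K)"
    by (rule integral_mono_AE) (use int bd finite_measure.integrable_const[OF fin] in auto)
  also have "\<dots> = K * measure M (space M)" by simp
  finally show ?thesis .
qed

definition F0 :: "real \<Rightarrow> real \<Rightarrow> real measure \<Rightarrow> real \<Rightarrow> complex" where
  "F0 \<alpha> \<beta> \<rho> x0 = of_real \<alpha> * of_real x0 + of_real \<beta> + integral\<^sup>L \<rho> (kern (of_real x0))"

lemma rep_kern: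
  assumes "nevanlinna_rep f \<alpha> \<beta> \<rho>" "Im z > 0"
  shows "f z = of_real \<alpha> * z + of_real \<beta> + integral\<^sup>L \<rho> (kern z)"
  using assms unfolding nevanlinna_rep_def upper_half_def kern_def[abs_def] by auto

lemma decomp:
  assumes rep: "nevanlinna_rep f \<alpha> \<beta> \<rho>" and e: "e > 0"
    and null: "emeasure \<rho> {x0 - e<..<x0 + e} = 0" and z: "Im z > 0"
  shows "f z = F0 \<alpha> \<beta> \<rho> x0 + (z - of_real x0) * (of_real \<alpha> + integral\<^sup>L \<rho> (Qk x0 z))"
proof -
  have fin: "finite_measure \<rho>" and sets: "sets \<rho> = sets borel" using rep by (auto simp: nevanlinna_rep_def)
  note i1 = integrable_kern[OF fin sets z] and i2 = integrable_kern_real[OF fin sets e null]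
  have "integral\<^sup>L \<rho> (kern z) - integral\<^sup>L \<rho> (kern (of_real x0)) = integral\<^sup>L \<rho> (\<lambda>t. kern z t - kern (of_real x0) t)"
    using i1 i2 by simp
  also have "\<dots> = integral\<^sup>L \<rho> (\<lambda>t. (z - of_real x0) * Qk x0 z t)"
  proof (rule integral_cong_AE)
    show "(\<lambda>t. kern z t - kern (of_real x0) t) \<in> borel_measurable \<rho>" by (intro meas_rho[OF sets]) measurable
    show "(\<lambda>t. (z - of_real x0) * Qk x0 z t) \<in> borel_measurable \<rho>" by (intro meas_rho[OF sets]) measurable
    show "AE t in \<rho>. kern z t - kern (of_real x0) t = (z - of_real x0) * Qk x0 z t"
      using AE_far[OF sets null]
    proof (rule eventually_mono)
      fix t assume "e \<le> \<bar>t - x0\<bar>"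
      then have "t \<noteq> x0" using e by auto
      moreover have "z - of_real x0 \<noteq> 0" using z by auto
      ultimately show "kern z t - kern (of_real x0) t = (z - of_real x0) * Qk x0 z t"
        using Qk_eq[OF z] by simp
    qed
  qed
  also have "\<dots> = (z - of_real x0) * integral\<^sup>L \<rho> (Qk x0 z)" by simp
  finally have "integral\<^sup>L \<rho> (kern z) = integral\<^sup>L \<rho> (kern (of_real x0)) + (z - of_real x0) * integral\<^sup>L \<rho> (Qk x0 z)"
    by (simp add: algebra_simps)
  then show ?thesis using rep_kern[OF rep z] by (simp add: F0_def algebra_simps)
qed

lemma tendsto_F0:
  assumes rep: "nevanlinna_rep f \<alpha> \<beta> \<rho>" and e: "e > 0"
    and null: "emeasure \<rho> {x0 - e<..<x0 + e} = 0"
  shows "(f \<longlongrightarrow> F0 \<alpha> \<beta> \<rho> x0) (at (of_real x0) within upper_half)"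
proof -
  have fin: "finite_measure \<rho>" and sets: "sets \<rho> = sets borel" and al: "\<alpha> \<ge> 0"
    using rep by (auto simp: nevanlinna_rep_def)
  define K where "K = 2*((1 + 2*x0^2)/e^2 + 2)"
  define C where "C = \<alpha> + K * measure \<rho> (space \<rho>)"
  have ev: "eventually (\<lambda>z. norm (f z - F0 \<alpha> \<beta> \<rho> x0) \<le> C * cmod (z - of_real x0)) (at (of_real x0) within upper_half)"
    unfolding eventually_at
  proof (intro exI[of _ "e/2"] conjI ballI impI)
    show "e/2 > 0" using e by simp
    fix z assume zu: "z \<in> upper_half" and "z \<noteq> of_real x0 \<and> dist z (of_real x0) < e / 2"
    then have z: "Im z > 0" and d: "cmod (z - of_real x0) \<le> e/2" by (auto simp: upper_half_def dist_norm)
    have bd: "norm (integral\<^sup>L \<rho> (Qk x0 z)) \<le> K * measure \<rho> (space \<rho>)"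
    proof (rule norm_integral_AE_bound[OF fin])
      show "AE t in \<rho>. norm (Qk x0 z t) \<le> K"
        using AE_far[OF sets null] by (rule eventually_mono) (use Qk_bound[OF e _ d] in \<open>auto simp: K_def\<close>)
      show "integrable \<rho> (Qk x0 z)" by (rule integrable_Qk[OF fin sets e null z])
    qed
    have "norm (f z - F0 \<alpha> \<beta> \<rho> x0) = cmod (z - of_real x0) * norm (of_real \<alpha> + integral\<^sup>L \<rho> (Qk x0 z))"
      using decomp[OF rep e null z] by (simp add: norm_mult)
    also have "norm (of_real \<alpha> + integral\<^sup>L \<rho> (Qk x0 z)) \<le> C"
    proof -
      have "norm (of_real \<alpha> + integral\<^sup>L \<rho> (Qk x0 z)) \<le> norm (of_real \<alpha> :: complex) + norm (integral\<^sup>L \<rho> (Qk x0 z))"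
        by (rule norm_triangle_ineq)
      then show ?thesis using bd al by (simp add: C_def)
    qed
    then have "cmod (z - of_real x0) * norm (of_real \<alpha> + integral\<^sup>L \<rho> (Qk x0 z)) \<le> cmod (z - of_real x0) * C"
      by (simp add: mult_left_mono)
    finally show "norm (f z - F0 \<alpha> \<beta> \<rho> x0) \<le> C * cmod (z - of_real x0)" by (simp add: mult.commute)
  qed
  have lim: "((\<lambda>z. C * cmod (z - of_real x0)) \<longlongrightarrow> 0) (at (of_real x0) within upper_half)"
  proof -
    have "((\<lambda>z. C * cmod (z - of_real x0)) \<longlongrightarrow> C * cmod (of_real x0 - of_real x0 :: complex)) (at (of_real x0) within upper_half)"
      by (intro tendsto_intros)
    then show ?thesis by simp
  qed
  show ?thesis unfolding Lim_null[of f] by (rule Lim_null_comparison[OF ev lim])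
qed

lemma ext_val_F0:
  assumes rep: "nevanlinna_rep f \<alpha> \<beta> \<rho>" and e: "e > 0"
    and null: "emeasure \<rho> {x0 - e<..<x0 + e} = 0"
  shows "ext_val f (Some x0) = F0 \<alpha> \<beta> \<rho> x0"
proof -
  have "of_real x0 islimpt upper_half"
  proof (rule islimptI)
    fix T :: "complex set" assume "of_real x0 \<in> T" "open T"
    then obtain r where r: "r > 0" "ball (of_real x0) r \<subseteq> T" by (meson openE)
    let ?y = "of_real x0 + \<i> * of_real (r/2)"
    have "?y \<in> ball (of_real x0) r" using r by (simp add: dist_norm norm_mult)
    moreover have "?y \<in> upper_half" using r by (simp add: upper_half_def)
    moreover have "?y \<noteq> of_real x0" using r by (simp add: complex_eq_iff)
    ultimately show "\<exists>y\<in>upper_half. y \<in> T \<and> y \<noteq> of_real x0" using r by blast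
  qed
  then have nt: "at (of_real x0) within upper_half \<noteq> bot" by (simp add: trivial_limit_within)
  show ?thesis unfolding ext_val_def using tendsto_Lim[OF nt tendsto_F0[OF assms]] by simp
qed


lemma Im_ofreal_mult: "Im (of_real c * w) = c * Im w" by simp

lemma Im_qQk:
  fixes a b t x0 :: real and z :: complex
  shows "Im ((of_real a * z + of_real b) * Qk x0 z t) =
    ((1 + t^2) / (t - x0)) * ((a*t+b) * Im z / (cmod (of_real t - z))^2)"
proof -
  have "(of_real a * z + of_real b) * Qk x0 z t = of_real ((1 + t^2) / (t - x0)) * ((of_real a * z + of_real b) / (of_real t - z))"
    unfolding Qk_def by (simp add: divide_simps of_real_diff[symmetric] del: of_real_diff)
  then show ?thesis by (simp only: Im_ofreal_mult Im_lin_div)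
qed

lemma core:
  fixes a b :: real
  assumes rep: "nevanlinna_rep f \<alpha> \<beta> \<rho>" and e: "e > 0"
    and null: "emeasure \<rho> {x0 - e<..<x0 + e} = 0" and z: "Im z > 0"
    and F0im: "Im (F0 \<alpha> \<beta> \<rho> x0) = 0" and F0re: "Re (F0 \<alpha> \<beta> \<rho> x0) \<le> 0"
    and aa: "\<alpha> * a \<ge> 0" and qx0: "a * x0 + b \<ge> 0"
    and AEsign: "AE t in \<rho>. (a*t+b)*(t - x0) \<ge> 0"
  shows "Im (f z * (of_real a * z + of_real b) / (z - of_real x0)) \<ge> 0"
proof -
  have fin: "finite_measure \<rho>" and sets: "sets \<rho> = sets borel"
    using rep by (auto simp: nevanlinna_rep_def)
  define q where "q = of_real a * z + of_real b"
  define r where "r = Re (F0 \<alpha> \<beta> \<rho> x0)"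
  have F0r: "F0 \<alpha> \<beta> \<rho> x0 = of_real r" using F0im by (simp add: r_def complex_eq_iff)
  have w: "z - of_real x0 \<noteq> 0" using z by auto
  have iQ: "integrable \<rho> (Qk x0 z)" by (rule integrable_Qk[OF fin sets e null z])
  have eq: "f z * q / (z - of_real x0) = of_real r * (q / (z - of_real x0)) + of_real \<alpha> * q
      + integral\<^sup>L \<rho> (\<lambda>t. q * Qk x0 z t)"
    unfolding decomp[OF rep e null z] F0r using w iQ by (simp add: field_simps)
  have t1: "Im (of_real r * (q / (z - of_real x0))) \<ge> 0"
  proof -
    have "q / (z - of_real x0) = - ((of_real a * z + of_real b) / (of_real x0 - z))"
      unfolding q_def by (metis minus_diff_eq minus_divide_right)
    moreover have "Im ((of_real a * z + of_real b) / (of_real x0 - z)) = (a*x0+b) * Im z / (cmod (of_real x0 - z))^2"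
      by (rule Im_lin_div)
    ultimately have "Im (q / (z - of_real x0)) = - ((a*x0+b) * Im z / (cmod (of_real x0 - z))^2)"
      by simp
    moreover have "(a*x0+b) * Im z / (cmod (of_real x0 - z))^2 \<ge> 0" using qx0 z by simp
    ultimately have "Im (q / (z - of_real x0)) \<le> 0" by simp
    moreover have "r \<le> 0" using F0re by (simp add: r_def)
    ultimately show ?thesis unfolding Im_ofreal_mult by (intro mult_nonpos_nonpos)
  qed
  have t2: "Im (of_real \<alpha> * q) \<ge> 0"
  proof -
    have "Im q = a * Im z" by (simp add: q_def)
    then have eqa: "Im (of_real \<alpha> * q) = (\<alpha> * a) * Im z" by (simp only: Im_ofreal_mult mult.assoc)
    show ?thesis unfolding eqa by (rule mult_nonneg_nonneg) (use aa z in auto)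
  qed
  have t3: "Im (integral\<^sup>L \<rho> (\<lambda>t. q * Qk x0 z t)) \<ge> 0"
  proof -
    have "Im (integral\<^sup>L \<rho> (\<lambda>t. q * Qk x0 z t)) = integral\<^sup>L \<rho> (\<lambda>t. Im (q * Qk x0 z t))"
      using iQ by (simp add: integral_Im)
    also have "\<dots> \<ge> 0"
    proof (rule integral_nonneg_AE)
      show "AE t in \<rho>. 0 \<le> Im (q * Qk x0 z t)"
        using AEsign
      proof (rule eventually_mono)
        fix t assume s: "(a*t+b)*(t - x0) \<ge> 0"
        have "(1 + t^2) / (t - x0) * (a*t+b) \<ge> 0"
        proof (cases "t > x0")
          case True
          then have "a*t+b \<ge> 0" using s by (simp add: zero_le_mult_iff)
          then show ?thesis using True by (simp add: add_nonneg_nonneg)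
        next
          case False
          have h: "(1 + t^2) / (t - x0) \<le> 0" using False by (simp add: divide_nonneg_nonpos add_nonneg_nonneg)
          show ?thesis
          proof (cases "t = x0")
            case True then show ?thesis by simp
          next
            case F2: False
            then have "a*t+b \<le> 0" using s False by (auto simp: zero_le_mult_iff)
            then show ?thesis using h by (intro mult_nonpos_nonpos)
          qed
        qed
        then have "(1 + t^2) / (t - x0) * ((a*t+b) * Im z / (cmod (of_real t - z))^2) \<ge> 0"
        proof -
          have "(1 + t^2) / (t - x0) * ((a*t+b) * Im z / (cmod (of_real t - z))^2)
             = ((1 + t^2) / (t - x0) * (a*t+b)) * (Im z / (cmod (of_real t - z))^2)" by simp
          then show ?thesis by (simp only:) (rule mult_nonneg_nonneg[OF \<open>(1 + t^2) / (t - x0) * (a*t+b) \<ge> 0\<close> divide_nonneg_nonneg], use z in auto)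
        qed
        then show "0 \<le> Im (q * Qk x0 z t)" unfolding q_def Im_qQk .
      qed
    qed
    finally show ?thesis .
  qed
  show ?thesis using eq t1 t2 t3 unfolding q_def[symmetric] by simp
qed


lemma rep_sigma:
  assumes "nevanlinna_class f"
  obtains \<alpha> \<beta> \<rho> where "nevanlinna_rep f \<alpha> \<beta> \<rho>"
    "sigma_set f = Some ` measure_support \<rho> \<union>
         (if \<alpha> > 0 \<or> \<not> bounded (measure_support \<rho>) then {None} else {})"
proof -
  define T where "T = (SOME (\<alpha>, \<beta>, \<rho>). nevanlinna_rep f \<alpha> \<beta> \<rho>)"
  have ex: "\<exists>x. (\<lambda>(\<alpha>, \<beta>, \<rho>). nevanlinna_rep f \<alpha> \<beta> \<rho>) x" using herglotz[OF assms] by auto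
  have "(\<lambda>(\<alpha>, \<beta>, \<rho>). nevanlinna_rep f \<alpha> \<beta> \<rho>) T" unfolding T_def by (rule someI_ex[OF ex])
  moreover obtain \<alpha> \<beta> \<rho> where T: "T = (\<alpha>, \<beta>, \<rho>)" by (cases T) auto
  ultimately have "nevanlinna_rep f \<alpha> \<beta> \<rho>" by simp
  moreover have "sigma_set f = Some ` measure_support \<rho> \<union>
         (if \<alpha> > 0 \<or> \<not> bounded (measure_support \<rho>) then {None} else {})"
    unfolding sigma_set_def T_def[symmetric] T by simp
  ultimately show ?thesis using that by blast
qed

lemma lim_left:
  fixes w z :: complex and d :: real
  assumes z: "Im z > 0" and ev: "eventually (\<lambda>x. Im (w / (z - of_real x)) \<ge> 0) (at_left d)"
  shows "Im (w / (z - of_real d)) \<ge> 0"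
proof (rule tendsto_lowerbound[OF _ ev])
  have "z - of_real d \<noteq> 0" using z by auto
  then show "((\<lambda>x. Im (w / (z - of_real x))) \<longlongrightarrow> Im (w / (z - of_real d))) (at_left d)"
    by (intro tendsto_intros) auto
  show "at_left d \<noteq> bot" by simp
qed

lemma lim_top:
  fixes w z :: complex
  assumes z: "Im z > 0" and ev: "eventually (\<lambda>x. Im (w * of_real x / (z - of_real x)) \<ge> 0) at_top"
  shows "Im (- w) \<ge> 0"
proof (rule tendsto_lowerbound[OF _ ev])
  have "((\<lambda>x::real. of_real (inverse x) :: complex) \<longlongrightarrow> of_real 0) at_top"
    by (intro tendsto_of_real tendsto_inverse_0_at_top filterlim_ident)
  then have l: "((\<lambda>x::real. w / (z * of_real (inverse x) - 1)) \<longlongrightarrow> w / (z * 0 - 1)) at_top"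
    by (intro tendsto_intros) auto
  have "eventually (\<lambda>x::real. w / (z * of_real (inverse x) - 1) = w * of_real x / (z - of_real x)) at_top"
    using eventually_gt_at_top[of 0]
  proof (rule eventually_mono)
    fix x :: real assume x: "x > 0"
    have "z - of_real x \<noteq> 0" using z by auto
    then show "w / (z * of_real (inverse x) - 1) = w * of_real x / (z - of_real x)"
      using x by (simp add: field_simps)
  qed
  from tendsto_cong[OF this] l
  have "((\<lambda>x::real. w * of_real x / (z - of_real x)) \<longlongrightarrow> - w) at_top" by simp
  then show "((\<lambda>x. Im (w * of_real x / (z - of_real x))) \<longlongrightarrow> Im (- w)) at_top"
    by (intro tendsto_intros)
  show "(at_top :: real filter) \<noteq> bot" by simp
qed


lemma core2:
  fixes a b :: real
  assumes rep: "nevanlinna_rep f \<alpha> \<beta> \<rho>"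
    and sig: "sigma_set f = Some ` measure_support \<rho> \<union>
         (if \<alpha> > 0 \<or> \<not> bounded (measure_support \<rho>) then {None} else {})"
    and sub: "arc c d \<subseteq> Omega_set f"
    and neg: "\<forall>x\<in>arc c d. Im (ext_val f x) = 0 \<and> Re (ext_val f x) < 0"
    and x0: "Some x0 \<in> arc c d" and z: "Im z > 0"
    and aa: "\<alpha> * a \<ge> 0" and qx0: "a * x0 + b \<ge> 0"
    and sign: "\<And>t. Some t \<notin> arc c d \<Longrightarrow> (a*t+b)*(t - x0) \<ge> 0"
  shows "Im (f z * (of_real a * z + of_real b) / (z - of_real x0)) \<ge> 0"
proof -
  have sets: "sets \<rho> = sets borel" using rep by (auto simp: nevanlinna_rep_def)
  have "Some x0 \<notin> sigma_set f" using x0 sub by (auto simp: Omega_set_def)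
  then have "x0 \<notin> measure_support \<rho>" using sig by auto
  then obtain e where e: "e > 0" "\<not> emeasure \<rho> {x0 - e<..<x0 + e} > 0"
    by (auto simp: measure_support_def)
  then have null: "emeasure \<rho> {x0 - e<..<x0 + e} = 0" by (simp add: not_gr_zero)
  have F: "ext_val f (Some x0) = F0 \<alpha> \<beta> \<rho> x0" by (rule ext_val_F0[OF rep e(1) null])
  have "Im (F0 \<alpha> \<beta> \<rho> x0) = 0" "Re (F0 \<alpha> \<beta> \<rho> x0) \<le> 0"
    using neg x0 unfolding F[symmetric] by (auto simp: less_imp_le)
  moreover have "AE t in \<rho>. (a*t+b)*(t - x0) \<ge> 0"
    using AE_in_support[OF sets]
  proof (rule eventually_mono)
    fix t assume "t \<in> measure_support \<rho>"
    then have "Some t \<in> sigma_set f" using sig by auto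
    then have "Some t \<notin> arc c d" using sub by (auto simp: Omega_set_def)
    then show "(a*t+b)*(t - x0) \<ge> 0" by (rule sign)
  qed
  ultimately show ?thesis using core[OF rep e(1) null z _ _ aa qx0] by blast
qed


lemma cmod_i_minus_pos: "cmod (\<i> - of_real c) > 0"
proof -
  have "\<i> - of_real c \<noteq> 0" by (simp add: complex_eq_iff)
  then show ?thesis by simp
qed

lemma z_minus_real_nz: "Im z > 0 \<Longrightarrow> z - of_real c \<noteq> 0"
  by auto

lemma cmod_i_nz: "(complex_of_real (cmod (\<i> - complex_of_real c))) \<noteq> 0"
  using cmod_i_minus_pos[of c] by simp

lemma Some_img[simp]: "Some t \<in> Some ` S \<longleftrightarrow> t \<in> S" by auto

lemma sgn1: "t \<notin> {c'<..<d'} \<Longrightarrow> c' < x0 \<Longrightarrow> x0 < d' \<Longrightarrow> 0 \<le> (t - c')*(t - (x0::real))"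
proof -
  assume a: "t \<notin> {c'<..<d'}" "c' < x0" "x0 < d'"
  then consider "t \<le> c'" | "d' \<le> t" by (metis greaterThanLessThan_iff not_le)
  then show ?thesis
  proof cases
    case 1 then show ?thesis using a by (intro mult_nonpos_nonpos) auto
  next
    case 2 then show ?thesis using a by (intro mult_nonneg_nonneg) auto
  qed
qed

lemma sgn2: "t \<notin> {c'<..} \<Longrightarrow> c' < x0 \<Longrightarrow> 0 \<le> (t - c')*(t - (x0::real))"
  by (intro mult_nonpos_nonpos) auto

lemma sgn3: "t \<notin> {c'<..} \<Longrightarrow> t \<notin> {..<d'} \<Longrightarrow> x0 < d' \<Longrightarrow> 0 \<le> (c' - t)*(t - (x0::real))"
  by (intro mult_nonneg_nonneg) auto

lemma if_lambda: "(\<lambda>z. if P then f z else g z) = (if P then (\<lambda>z. f z) else (\<lambda>z. g z))"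
  by auto

lemma nz_up: "z \<in> upper_half \<Longrightarrow> z - of_real a \<noteq> 0"
  by (auto simp: upper_half_def)

lemma nz_up2: "z \<in> upper_half \<Longrightarrow> z \<noteq> of_real a"
  using nz_up by force

lemma pJ_holo: "c \<noteq> d \<Longrightarrow> (\<lambda>z. pJ c d z) holomorphic_on upper_half"
proof (cases c)
  case None
  assume cd: "c \<noteq> d"
  then obtain b where d: "d = Some b" using None by (cases d) auto
  show ?thesis unfolding None d pJ.simps
    by (intro holomorphic_intros) (simp_all add: cmod_i_nz)
next
  case (Some a)
  show ?thesis
  proof (cases d)
    case None
    show ?thesis unfolding Some None pJ.simps
      by (intro holomorphic_intros) (simp_all add: nz_up nz_up2)
  next
    case (Some b)
    show ?thesis
    proof (cases "a < b")
      case True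
      show ?thesis unfolding \<open>c = Some a\<close> Some pJ.simps if_P[OF True]
        by (intro holomorphic_intros) (simp_all add: nz_up nz_up2)
    next
      case False
      show ?thesis unfolding \<open>c = Some a\<close> Some pJ.simps if_not_P[OF False]
        by (intro holomorphic_intros) (simp_all add: nz_up nz_up2)
    qed
  qed
qed

lemma pJ_nz: "c \<noteq> d \<Longrightarrow> Im z > 0 \<Longrightarrow> pJ c d z \<noteq> 0"
  using cmod_i_minus_pos
  by (cases c; cases d) (auto simp: z_minus_real_nz)


theorem main_Im:
  fixes f :: "complex \<Rightarrow> complex" and c d :: "real option"
  assumes nev: "nevanlinna_class f"
    and cd: "c \<noteq> d"
    and sub: "arc c d \<subseteq> Omega_set f"
    and neg: "\<forall>x\<in>arc c d. Im (ext_val f x) = 0 \<and> Re (ext_val f x) < 0"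
    and z: "Im z > 0"
  shows "Im (f z / pJ c d z) \<ge> 0"
proof -
  obtain \<alpha> \<beta> \<rho> where rep: "nevanlinna_rep f \<alpha> \<beta> \<rho>" and
    sig: "sigma_set f = Some ` measure_support \<rho> \<union>
         (if \<alpha> > 0 \<or> \<not> bounded (measure_support \<rho>) then {None} else {})"
    using rep_sigma[OF nev] by blast
  have al: "\<alpha> \<ge> 0" using rep by (simp add: nevanlinna_rep_def)
  note C = core2[OF rep sig sub neg _ z]
  have lt1: "\<And>d'::real. d' - 1 < d'" by simp
  show ?thesis
  proof (cases c)
    case None
    then obtain d' where c: "c = None" and d: "d = Some d'" using cd by (cases d) auto
    have ev: "eventually (\<lambda>x. Im (f z / (z - of_real x)) \<ge> 0) (at_left d')"
      using eventually_at_left_real[of "d' - 1" d', OF lt1]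
    proof (rule eventually_mono)
      fix x0 assume x0: "x0 \<in> {d' - 1<..<d'}"
      have "Im (f z * (of_real 0 * z + of_real 1) / (z - of_real x0)) \<ge> 0"
      proof (rule C)
        show "Some x0 \<in> arc c d" using x0 c d by simp
        show "\<alpha> * 0 \<ge> 0" by simp
        show "0 * x0 + 1 \<ge> 0" by simp
        fix t assume "Some t \<notin> arc c d"
        then have "t \<ge> d'" using c d by simp
        then show "0 \<le> (0 * t + 1) * (t - x0)" using x0 by simp
      qed
      then show "Im (f z / (z - of_real x0)) \<ge> 0" by simp
    qed
    have l: "Im (f z / (z - of_real d')) \<ge> 0" by (rule lim_left[OF z ev])
    have "f z / pJ c d z = of_real (cmod (\<i> - of_real d')) * (f z / (z - of_real d'))"
      using c d cmod_i_nz[of d'] z_minus_real_nz[OF z, of d'] by (simp add: field_simps)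
    then show ?thesis using l by (simp only: Im_ofreal_mult) simp
  next
    case (Some c')
    note c = Some
    show ?thesis
    proof (cases d)
      case None
      note d = None
      have ev: "eventually (\<lambda>x. Im (f z * (z - of_real c') * of_real x / (z - of_real x)) \<ge> 0) at_top"
        using eventually_gt_at_top[of "max c' 0"]
      proof (rule eventually_mono)
        fix x0 assume x0: "x0 > max c' 0"
        have "Im (f z * (of_real 1 * z + of_real (- c')) / (z - of_real x0)) \<ge> 0"
        proof (rule C)
          show "Some x0 \<in> arc c d" using x0 c d by simp
          show "\<alpha> * 1 \<ge> 0" using al by simp
          show "1 * x0 + - c' \<ge> 0" using x0 by simp
          fix t assume "Some t \<notin> arc c d"
          then have "t \<notin> {c'<..}" using c d by simp
          then show "0 \<le> (1 * t + - c') * (t - x0)" using sgn2[of t c' x0] x0 by simp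
        qed
        then have h: "Im (f z * (z - of_real c') / (z - of_real x0)) \<ge> 0" by simp
        have "Im (f z * (z - of_real c') * of_real x0 / (z - of_real x0)) = x0 * Im (f z * (z - of_real c') / (z - of_real x0))"
          by (simp only: Im_ofreal_mult[symmetric]) (simp add: ac_simps)
        then show "Im (f z * (z - of_real c') * of_real x0 / (z - of_real x0)) \<ge> 0"
          using h x0 by simp
      qed
      have l: "Im (- (f z * (z - of_real c'))) \<ge> 0" by (rule lim_top[OF z ev])
      have "f z / pJ c d z = of_real (1 / cmod (\<i> - of_real c')) * (- (f z * (z - of_real c')))"
        using c d cmod_i_nz[of c'] z_minus_real_nz[OF z, of c'] by (simp add: field_simps)
      then show ?thesis using l by (simp only: Im_ofreal_mult) simp
    next
      case (Some d')
      note d = Some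
      have k: "cmod (\<i> - of_real c') / cmod (\<i> - of_real d') > 0"
        using cmod_i_minus_pos by simp
      show ?thesis
      proof (cases "c' < d'")
        case True
        have ev: "eventually (\<lambda>x. Im (f z * (z - of_real c') / (z - of_real x)) \<ge> 0) (at_left d')"
          using eventually_at_left_real[OF True]
        proof (rule eventually_mono)
          fix x0 assume x0: "x0 \<in> {c'<..<d'}"
          have "Im (f z * (of_real 1 * z + of_real (- c')) / (z - of_real x0)) \<ge> 0"
          proof (rule C)
            show "Some x0 \<in> arc c d" using x0 c d True by simp
            show "\<alpha> * 1 \<ge> 0" using al by simp
            show "1 * x0 + - c' \<ge> 0" using x0 by simp
            fix t assume "Some t \<notin> arc c d"
            then have "t \<notin> {c'<..<d'}" using c d True by simp
            then show "0 \<le> (1 * t + - c') * (t - x0)" using sgn1[of t c' d' x0] x0 by simp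
          qed
          then show "Im (f z * (z - of_real c') / (z - of_real x0)) \<ge> 0" by simp
        qed
        have l: "Im (f z * (z - of_real c') / (z - of_real d')) \<ge> 0" by (rule lim_left[OF z ev])
        have "f z / pJ c d z = of_real (cmod (\<i> - of_real d') / cmod (\<i> - of_real c')) * (f z * (z - of_real c') / (z - of_real d'))"
          using c d True cmod_i_nz[of c'] cmod_i_nz[of d'] z_minus_real_nz[OF z, of c'] z_minus_real_nz[OF z, of d']
          by (simp add: field_simps)
        then show ?thesis using l cmod_i_minus_pos[of c'] cmod_i_minus_pos[of d'] by (simp only: Im_ofreal_mult) simp
      next
        case False
        then have dc: "d' < c'" using c d cd by auto
        have a0: "\<alpha> = 0"
        proof -
          have "None \<in> arc c d" using c d dc by simp
          then have "None \<notin> sigma_set f" using sub by (auto simp: Omega_set_def)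
          then show ?thesis using sig al by (auto split: if_splits)
        qed
        have ev: "eventually (\<lambda>x. Im (f z * (of_real c' - z) / (z - of_real x)) \<ge> 0) (at_left d')"
          using eventually_at_left_real[of "d' - 1" d', OF lt1]
        proof (rule eventually_mono)
          fix x0 assume x0: "x0 \<in> {d' - 1<..<d'}"
          have "Im (f z * (of_real (-1) * z + of_real c') / (z - of_real x0)) \<ge> 0"
          proof (rule C)
            show "Some x0 \<in> arc c d" using x0 c d dc by simp
            show "\<alpha> * -1 \<ge> 0" using a0 by simp
            show "-1 * x0 + c' \<ge> 0" using x0 dc by simp
            fix t assume "Some t \<notin> arc c d"
            then have "t \<notin> {c'<..}" "t \<notin> {..<d'}" using c d dc by auto
            then show "0 \<le> (-1 * t + c') * (t - x0)" using sgn3[of t c' d' x0] x0 by simp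
          qed
          then show "Im (f z * (of_real c' - z) / (z - of_real x0)) \<ge> 0" by simp
        qed
        have l: "Im (f z * (of_real c' - z) / (z - of_real d')) \<ge> 0" by (rule lim_left[OF z ev])
        have "f z / pJ c d z = of_real (cmod (\<i> - of_real d') / cmod (\<i> - of_real c')) * (f z * (of_real c' - z) / (z - of_real d'))"
          using c d dc cmod_i_nz[of c'] cmod_i_nz[of d'] z_minus_real_nz[OF z, of c'] z_minus_real_nz[OF z, of d']
          by (simp add: field_simps)
        then show ?thesis using l cmod_i_minus_pos[of c'] cmod_i_minus_pos[of d'] by (simp only: Im_ofreal_mult) simp
      qed
    qed
  qed
qed

theorem lemma4p1:
  fixes f :: "complex \<Rightarrow> complex" and c d :: "real option"
  assumes "nevanlinna_class f"
    and "\<exists>z\<in>upper_half. f z \<noteq> 0"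
    and "c \<noteq> d"
    and "arc c d \<subseteq> Omega_set f"
    and "\<forall>x\<in>arc c d. Im (ext_val f x) = 0 \<and> Re (ext_val f x) < 0"
  shows "\<exists>g. nevanlinna_class g \<and> (\<forall>z\<in>upper_half. f z = pJ c d z * g z)"
proof (intro exI conjI)
  let ?g = "\<lambda>z. f z / pJ c d z"
  have hf: "f holomorphic_on upper_half" using assms(1) by (simp add: nevanlinna_class_def)
  show "nevanlinna_class ?g"
    unfolding nevanlinna_class_def
  proof
    show "?g holomorphic_on upper_half"
      using hf pJ_holo[OF assms(3)] pJ_nz[OF assms(3)]
      by (intro holomorphic_on_divide) (auto simp: upper_half_def)
    show "\<forall>z\<in>upper_half. 0 \<le> Im (?g z)"
      using main_Im[OF assms(1,3,4,5)] by (auto simp: upper_half_def)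
  qed
  show "\<forall>z\<in>upper_half. f z = pJ c d z * ?g z"
    using pJ_nz[OF assms(3)] by (auto simp: upper_half_def)
qed


end
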